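(* Let $r\ge 2$ and $n\ge 3$, and let $\lambda$ be the word morphism on $\{E,N\}$ given by $\lambda(E)=E^{r-1}N$, $\lambda(N)=E^{r-2}N$, and $\theta$ the morphism given by $\theta(E)=E$, $\theta(N)=EN$. Then applying $\lambda$ to the Christoffel word of $\mathcal{D}_n$ yields the Christoffel word of $\mathcal{D}_{n+1}$, and applying $\theta\circ\lambda\circ\theta^{-1}$ to the Christoffel word of $\mathcal{C}_n$ yields the Christoffel word of $\mathcal{C}_{n+1}$.
   Context: Fix an integer $r\ge 2$. Define $c_1=0$, $c_2=1$, $c_n=rc_{n-1}-c_{n-2}$ for $n\ge 3$. For nonnegative integers $a,b$, the maximal Dyck path $\mathcal{P}(a,b)$ is the lattice path from $(0,0)$ to $(a,b)$ using unit north and east steps that never passes strictly above the line segment from $(0,0)$ to $(a,b)$ and is closest to that segment. For $n\ge 3$ let $\mathcal{C}_n=\mathcal{P}(c_{n-1},c_{n-2})$ and $\mathcal{D}_n=\mathcal{P}(c_{n-1}-c_{n-2},c_{n-2})$. The (lower) Christoffel word of such a path is the word over $\{E,N\}$ obtained by reading its steps from $(0,0)$ onward, recording $E$ for each east step and $N$ for each north step. The Christoffel word of $\mathcal{C}_n$ equals $\theta$ applied to the Christoffel word of $\mathcal{D}_n$; $\theta^{-1}$ denotes the inverse of $\theta$ on words in its image (replacing each factor $EN$ coming from an $N$ by $N$). *)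

theory Defs
  imports Main
begin

datatype letter = E | N

text \<open>The sequence c: c_1 = 0, c_2 = 1, c_n = r c_(n-1) - c_(n-2) (n >= 3).
  Index 0 is unused (set to 0).\<close>
fun cseq :: "nat \<Rightarrow> nat \<Rightarrow> int" where
  "cseq r 0 = 0"
| "cseq r (Suc 0) = 0"
| "cseq r (Suc (Suc 0)) = 1"
| "cseq r (Suc (Suc (Suc n))) = int r * cseq r (Suc (Suc n)) - cseq r (Suc n)"

text \<open>Endpoint of the lattice path encoded by a word over {E,N}, starting at (0,0).\<close>
definition xcoord :: "letter list \<Rightarrow> nat" where
  "xcoord w = length (filter (\<lambda>l. l = E) w)"
definition ycoord :: "letter list \<Rightarrow> nat" where
  "ycoord w = length (filter (\<lambda>l. l = N) w)"

text \<open>A lattice path from (0,0) to (a,b) never passing strictly above the segment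
  from (0,0) to (a,b): every vertex (x,y) satisfies a*y <= b*x.\<close>
definition below_path :: "nat \<Rightarrow> nat \<Rightarrow> letter list \<Rightarrow> bool" where
  "below_path a b w \<longleftrightarrow> xcoord w = a \<and> ycoord w = b \<and>
     (\<forall>k \<le> length w. a * ycoord (take k w) \<le> b * xcoord (take k w))"

definition path_below :: "letter list \<Rightarrow> letter list \<Rightarrow> bool" where
  "path_below w' w \<longleftrightarrow> (\<forall>k. ycoord (take k w') \<le> ycoord (take k w))"

text \<open>The maximal Dyck path P(a,b), given by its (lower Christoffel) word:
  the path below the segment that is closest to it, i.e. lies weakly above
  every other such path.\<close>
definition christoffel :: "nat \<Rightarrow> nat \<Rightarrow> letter list" where
  "christoffel a b = (THE w. below_path a b w \<and>
       (\<forall>w'. below_path a b w' \<longrightarrow> path_below w' w))"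

text \<open>Christoffel words of C_n = P(c_(n-1), c_(n-2)) and D_n = P(c_(n-1)-c_(n-2), c_(n-2)).\<close>
definition Cword :: "nat \<Rightarrow> nat \<Rightarrow> letter list" where
  "Cword r n = christoffel (nat (cseq r (n-1))) (nat (cseq r (n-2)))"
definition Dword :: "nat \<Rightarrow> nat \<Rightarrow> letter list" where
  "Dword r n = christoffel (nat (cseq r (n-1) - cseq r (n-2))) (nat (cseq r (n-2)))"

definition morph :: "(letter \<Rightarrow> letter list) \<Rightarrow> letter list \<Rightarrow> letter list" where
  "morph f w = concat (map f w)"

definition lam :: "nat \<Rightarrow> letter list \<Rightarrow> letter list" where
  "lam r = morph (\<lambda>l. case l of E \<Rightarrow> replicate (r-1) E @ [N] | N \<Rightarrow> replicate (r-2) E @ [N])"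

definition theta :: "letter list \<Rightarrow> letter list" where
  "theta = morph (\<lambda>l. case l of E \<Rightarrow> [E] | N \<Rightarrow> [E, N])"

definition theta_inv :: "letter list \<Rightarrow> letter list" where
  "theta_inv w = (THE u. theta u = w)"

end

theory Submission
  imports Defs
begin

lemma xc_simps[simp]: "xcoord [] = 0" "xcoord (u @ v) = xcoord u + xcoord v"
  "xcoord (l # u) = (if l = E then 1 else 0) + xcoord u"
  "xcoord (replicate k E) = k"
  by (auto simp: xcoord_def)

lemma yc_simps[simp]: "ycoord [] = 0" "ycoord (u @ v) = ycoord u + ycoord v"
  "ycoord (l # u) = (if l = N then 1 else 0) + ycoord u"
  "ycoord (replicate k E) = 0"
  by (auto simp: ycoord_def)

lemma len_xy: "xcoord w + ycoord w = length w"
proof (induction w)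
  case (Cons l w) then show ?case by (cases l) auto
qed simp

definition Dv :: "nat \<Rightarrow> nat \<Rightarrow> letter list \<Rightarrow> int" where
  "Dv a b u = int b * int (xcoord u) - int a * int (ycoord u)"

definition okw :: "nat \<Rightarrow> nat \<Rightarrow> letter list \<Rightarrow> bool" where
  "okw a b u \<longleftrightarrow> 0 \<le> Dv a b u \<and> Dv a b u < int (a + b)"

definition balT :: "nat \<Rightarrow> nat \<Rightarrow> letter list \<Rightarrow> bool" where
  "balT a b w \<longleftrightarrow> (\<forall>k. okw a b (take k w))"

lemma balT_Nil: "balT a b [] \<longleftrightarrow> 0 < a + b"
  by (simp add: balT_def okw_def Dv_def) linarith

lemma okw_trans: "okw a b u \<Longrightarrow> a + b \<le> a' + b' \<Longrightarrow> Dv a' b' u' = Dv a b u \<Longrightarrow> okw a' b' u'"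
proof -
  assume h: "okw a b u" "a + b \<le> a' + b'" "Dv a' b' u' = Dv a b u"
  have "int (a + b) \<le> int (a' + b')" using h(2) by (simp only: of_nat_le_iff)
  then show ?thesis using h unfolding okw_def by linarith
qed

lemma Dv_repE: "Dv a b (replicate k E) = int k * int b"
  by (simp add: Dv_def)

lemma Dv_app: "Dv a b (u @ v) = Dv a b u + Dv a b v"
  by (simp add: Dv_def algebra_simps)

lemma eq_by_y:
  assumes "length u = length v" "\<forall>k. ycoord (take k u) = ycoord (take k v)"
  shows "u = v"
proof (rule nth_equalityI)
  show "length u = length v" by fact
  fix i assume i: "i < length u"
  have a: "ycoord (take (Suc i) u) = ycoord (take i u) + (if u!i = N then 1 else 0)"
    using i by (simp add: take_Suc_conv_app_nth)
  have b: "ycoord (take (Suc i) v) = ycoord (take i v) + (if v!i = N then 1 else 0)"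
    using i assms(1) by (simp add: take_Suc_conv_app_nth)
  have "(u!i = N) = (v!i = N)" using a b assms(2) by (metis add_left_cancel one_neq_zero)
  then show "u!i = v!i" by (cases "u!i"; cases "v!i") auto
qed

lemma maxl:
  assumes bp: "below_path a b w'" and xw: "xcoord w = a" and yw: "ycoord w = b"
    and bal: "balT a b w"
  shows "path_below w' w"
  unfolding path_below_def
proof
  fix k
  have lw': "length w' = a + b" using bp len_xy[of w'] by (simp add: below_path_def)
  have lw: "length w = a + b" using xw yw len_xy[of w] by simp
  show "ycoord (take k w') \<le> ycoord (take k w)"
  proof (cases "k \<le> a + b")
    case False
    then show ?thesis using lw lw' bp yw by (simp add: below_path_def)
  next
    case True
    define x' where "x' = xcoord (take k w')"
    define y' where "y' = ycoord (take k w')"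
    define x where "x = xcoord (take k w)"
    define y where "y = ycoord (take k w)"
    have s': "x' + y' = k" using len_xy[of "take k w'"] lw' True x'_def y'_def by simp
    have s: "x + y = k" using len_xy[of "take k w"] lw True x_def y_def by simp
    have h1: "a * y' \<le> b * x'" using bp True lw' unfolding below_path_def x'_def y'_def by auto
    have h2: "int b * int x - int a * int y < int (a + b)"
      using bal unfolding balT_def okw_def Dv_def x_def y_def by blast
    show ?thesis unfolding y'_def[symmetric] y_def[symmetric]
    proof (rule ccontr)
      assume "\<not> y' \<le> y"
      then have "y + 1 \<le> y'" "x' + 1 \<le> x" using s s' by auto
      then have "a * (y + 1) \<le> a * y'" "b * (x' + 1) \<le> b * x" using mult_le_mono2 by blast+
      then have "a * y + a + b \<le> b * x" using h1 by (simp add: algebra_simps)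
      then have "int (a * y + a + b) \<le> int (b * x)" by linarith
      then show False using h2 by simp
    qed
  qed
qed

lemma char:
  assumes xw: "xcoord w = a" and yw: "ycoord w = b" and bal: "balT a b w"
  shows "christoffel a b = w"
  unfolding christoffel_def
proof (rule the_equality)
  have bw: "below_path a b w"
    unfolding below_path_def
  proof (intro conjI allI impI)
    fix k assume "k \<le> length w"
    have "0 \<le> Dv a b (take k w)" using bal by (simp add: balT_def okw_def)
    then have "int (a * ycoord (take k w)) \<le> int (b * xcoord (take k w))" by (simp add: Dv_def)
    then show "a * ycoord (take k w) \<le> b * xcoord (take k w)" by linarith
  qed (use xw yw in auto)
  show "below_path a b w \<and> (\<forall>w'. below_path a b w' \<longrightarrow> path_below w' w)"
    using bw maxl assms by blast
  fix w2 assume h: "below_path a b w2 \<and> (\<forall>w'. below_path a b w' \<longrightarrow> path_below w' w2)"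
  have p1: "path_below w w2" using h bw by blast
  have p2: "path_below w2 w" using h maxl assms by blast
  have "length w2 = length w" using h len_xy[of w2] len_xy[of w] xw yw
    by (simp add: below_path_def)
  then show "w2 = w" using p1 p2 eq_by_y unfolding path_below_def by (meson le_antisym)
qed

lemma balT_app: "balT a b (w @ v) \<longleftrightarrow> balT a b w \<and> (\<forall>k. okw a b (w @ take k v))"
proof
  assume h: "balT a b (w @ v)"
  have "okw a b (take k w)" for k
  proof (cases "k \<le> length w")
    case True then show ?thesis using h[unfolded balT_def, rule_format, of k] by simp
  next
    case False then show ?thesis using h[unfolded balT_def, rule_format, of "length w"] by simp
  qed
  moreover have "okw a b (w @ take k v)" for k
    using h[unfolded balT_def, rule_format, of "length w + k"] by simp
  ultimately show "balT a b w \<and> (\<forall>k. okw a b (w @ take k v))" by (simp add: balT_def)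
next
  assume h: "balT a b w \<and> (\<forall>k. okw a b (w @ take k v))"
  show "balT a b (w @ v)" unfolding balT_def
  proof
    fix k show "okw a b (take k (w @ v))"
    proof (cases "k \<le> length w")
      case True then show ?thesis using h by (simp add: balT_def)
    next
      case False then show ?thesis using h by simp
    qed
  qed
qed

lemma balT_pos: "balT a b w \<Longrightarrow> 0 < a + b"
  unfolding balT_def okw_def by (metis of_nat_0_less_iff order_le_less_trans take_0)

lemma balT_okw: "balT a b w \<Longrightarrow> okw a b w"
  unfolding balT_def by (metis take_all order_refl)

lemma take_repN: "k \<le> m \<Longrightarrow> take k (replicate m E @ [N]) = replicate k E"
  by (simp add: take_append)

lemma lam_simps: "lam r [] = []" "lam r (u @ v) = lam r u @ lam r v"
  "lam r [E] = replicate (r-1) E @ [N]" "lam r [N] = replicate (r-2) E @ [N]"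
  by (auto simp: lam_def morph_def)

lemma lam_counts:
  "xcoord (lam (s+2) w) = (s+1) * xcoord w + s * ycoord w \<and> ycoord (lam (s+2) w) = xcoord w + ycoord w"
proof (induction w)
  case Nil then show ?case by (simp add: lam_simps)
next
  case (Cons l w)
  have "lam (s+2) (l # w) = lam (s+2) [l] @ lam (s+2) w" using lam_simps(2)[of _ "[l]" w] by simp
  then show ?case using Cons by (cases l) (auto simp: lam_simps)
qed

lemma lam_D: "Dv ((s+1)*p + s*q) (p+q) (lam (s+2) u) = Dv p q u"
  using lam_counts[of s u] by (simp add: Dv_def algebra_simps)

lemma lam_bal:
  assumes "balT p q w"
  shows "balT ((s+1)*p + s*q) (p+q) (lam (s+2) w)"
  using assms
proof (induction w rule: rev_induct)
  case Nil
  then have "0 < p + q" by (rule balT_pos)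
  then show ?case by (simp add: lam_simps balT_Nil)
next
  case (snoc l w0)
  have bw0: "balT p q w0" and ok1: "\<forall>k. okw p q (w0 @ take k [l])"
    using snoc.prems balT_app by blast+
  have IH: "balT ((s+1)*p + s*q) (p+q) (lam (s+2) w0)" using snoc.IH bw0 .
  have okw0: "okw p q w0" using balT_okw[OF bw0] .
  have okl: "okw p q (w0 @ [l])" using ok1[rule_format, of 1] by simp
  let ?a = "(s+1)*p + s*q" let ?b = "p+q"
  have "okw ?a ?b (lam (s+2) w0 @ take k (lam (s+2) [l]))" for k
  proof (cases "k \<ge> length (lam (s+2) [l])")
    case True
    then have "lam (s+2) w0 @ take k (lam (s+2) [l]) = lam (s+2) (w0 @ [l])" by (simp add: lam_simps)
    then show ?thesis using okl lam_D[of s p q "w0 @ [l]"] okw_trans[of p q "w0 @ [l]" "(s+1)*p + s*q" "p+q"] by simp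
  next
    case False
    define D0 where "D0 = Dv p q w0"
    have D0: "0 \<le> D0" "D0 < int (p + q)" using okw0 by (auto simp: okw_def D0_def)
    show ?thesis
    proof (cases l)
      case E
      with False have k: "k \<le> s + 1" by (simp add: lam_simps)
      then have t: "take k (lam (s+2) [l]) = replicate k E" using E take_repN[of k "s+1"] by (simp add: lam_simps del: replicate_Suc)
      have "D0 + int q < int (p+q)" using okl E by (simp add: okw_def D0_def Dv_app Dv_def algebra_simps)
      moreover have "int k * int (p+q) \<le> int (s+1) * int (p+q)" using k
        by (intro mult_right_mono) auto
      moreover have "Dv ?a ?b (lam (s+2) w0 @ take k (lam (s+2) [l])) = D0 + int k * int (p+q)"
        using t lam_D[of s p q w0] by (simp add: Dv_app D0_def Dv_repE)
      ultimately show ?thesis using D0 unfolding okw_def by (simp add: algebra_simps)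
    next
      case N
      with False have k: "k \<le> s" by (simp add: lam_simps)
      then have t: "take k (lam (s+2) [l]) = replicate k E" using N take_repN[of k s] by (simp add: lam_simps del: replicate_Suc)
      have "int k * int (p+q) \<le> int s * int (p+q)" using k
        by (intro mult_right_mono) auto
      moreover have "Dv ?a ?b (lam (s+2) w0 @ take k (lam (s+2) [l])) = D0 + int k * int (p+q)"
        using t lam_D[of s p q w0] by (simp add: Dv_app D0_def Dv_repE)
      ultimately show ?thesis using D0 unfolding okw_def by (simp add: algebra_simps)
    qed
  qed
  then show ?case using IH balT_app by (simp add: lam_simps)
qed

lemma theta_simps: "theta [] = []" "theta (u @ v) = theta u @ theta v"
  "theta [E] = [E]" "theta [N] = [E, N]"
  "theta (E # u) = E # theta u" "theta (N # u) = E # N # theta u"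
  by (auto simp: theta_def morph_def)

lemma theta_counts:
  "xcoord (theta w) = xcoord w + ycoord w \<and> ycoord (theta w) = ycoord w"
proof (induction w)
  case (Cons l w) then show ?case by (cases l) (auto simp: theta_simps)
qed (simp add: theta_simps)

lemma theta_D: "Dv (p+q) q (theta u) = Dv p q u"
  using theta_counts[of u] by (simp add: Dv_def algebra_simps)

lemma theta_not_N: "theta z \<noteq> N # z'"
proof (cases z)
  case (Cons a list) then show ?thesis by (cases a) (auto simp: theta_simps)
qed (simp add: theta_simps)

lemma theta_inj: "theta u = theta v \<Longrightarrow> u = v"
proof (induction u arbitrary: v)
  case Nil then show ?case
  proof (cases v)
    case (Cons a list) then show ?thesis using Nil by (cases a) (auto simp: theta_simps)
  qed simp
next
  case (Cons l u)
  show ?case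
  proof (cases v)
    case Nil then show ?thesis using Cons.prems by (cases l) (auto simp: theta_simps)
  next
    case (Cons l' v')
    note nN = theta_not_N
    show ?thesis using Cons.prems Cons.IH nN unfolding Cons
      by (cases l; cases l') (auto simp: theta_simps theta_not_N[THEN not_sym])
  qed
qed

lemma theta_inv_theta: "theta_inv (theta w) = w"
  unfolding theta_inv_def by (rule the_equality) (auto dest: theta_inj)

lemma theta_bal:
  assumes "balT p q w"
  shows "balT (p+q) q (theta w)"
  using assms
proof (induction w rule: rev_induct)
  case Nil
  then have "0 < p + q" by (rule balT_pos)
  then show ?case by (simp add: theta_simps balT_Nil)
next
  case (snoc l w0)
  have bw0: "balT p q w0" and ok1: "\<forall>k. okw p q (w0 @ take k [l])"
    using snoc.prems balT_app by blast+
  have IH: "balT (p+q) q (theta w0)" using snoc.IH bw0 .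
  have okw0: "okw p q w0" using balT_okw[OF bw0] .
  have okl: "okw p q (w0 @ [l])" using ok1[rule_format, of 1] by simp
  have "okw (p+q) q (theta w0 @ take k (theta [l]))" for k
  proof (cases "k \<ge> length (theta [l])")
    case True
    then have "theta w0 @ take k (theta [l]) = theta (w0 @ [l])" by (simp add: theta_simps)
    then show ?thesis using okl theta_D[of p q "w0 @ [l]"] okw_trans[of p q "w0 @ [l]" "p+q" q] by simp
  next
    case False
    then have "k = 0 \<or> (k = 1 \<and> l = N)" by (cases l) (auto simp: theta_simps)
    then show ?thesis
    proof
      assume "k = 0" then show ?thesis using okw0 theta_D[of p q w0] by (simp add: okw_def)
    next
      assume "k = 1 \<and> l = N"
      then have "theta w0 @ take k (theta [l]) = theta w0 @ [E]" by (simp add: theta_simps)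
      then show ?thesis using okw0 theta_D[of p q w0]
        by (simp add: okw_def Dv_app) (simp add: Dv_def)
    qed
  qed
  then show ?case using IH balT_app by (simp add: theta_simps)
qed

lemma cmono: "r \<ge> 2 \<Longrightarrow> 0 \<le> cseq r (Suc k) \<and> cseq r (Suc k) \<le> cseq r (Suc (Suc k))"
proof (induction k)
  case 0 then show ?case by simp
next
  case (Suc k)
  then have h: "0 \<le> cseq r (Suc (Suc k))" "cseq r (Suc k) \<le> cseq r (Suc (Suc k))" by auto
  have "2 * cseq r (Suc (Suc k)) \<le> int r * cseq r (Suc (Suc k))"
    using h Suc.prems by (intro mult_right_mono) auto
  then show ?case using h by simp
qed

lemma Dstep:
  assumes r: "r = s + 2"
    and x: "xcoord (Dword r (m+3)) = nat (cseq r (m+2) - cseq r (m+1))"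
    and y: "ycoord (Dword r (m+3)) = nat (cseq r (m+1))"
    and b: "balT (nat (cseq r (m+2) - cseq r (m+1))) (nat (cseq r (m+1))) (Dword r (m+3))"
  shows "lam r (Dword r (m+3)) = Dword r (m+4)
    \<and> xcoord (Dword r (m+4)) = nat (cseq r (m+3) - cseq r (m+2))
    \<and> ycoord (Dword r (m+4)) = nat (cseq r (m+2))
    \<and> balT (nat (cseq r (m+3) - cseq r (m+2))) (nat (cseq r (m+2))) (Dword r (m+4))"
proof -
  define p where "p = nat (cseq r (m+2) - cseq r (m+1))"
  define q where "q = nat (cseq r (m+1))"
  define w where "w = Dword r (m+3)"
  have r2: "r \<ge> 2" using r by simp
  have c1: "0 \<le> cseq r (m+1)" "cseq r (m+1) \<le> cseq r (m+2)" using cmono[OF r2, of m] by auto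
  have ip: "int p = cseq r (m+2) - cseq r (m+1)" using c1 p_def by simp
  have iq: "int q = cseq r (m+1)" using c1 q_def by simp
  have c3: "cseq r (m+3) = int r * cseq r (m+2) - cseq r (m+1)"
    by (simp add: numeral_3_eq_3)
  have e1: "nat (cseq r (m+3) - cseq r (m+2)) = (s+1)*p + s*q"
  proof -
    have "int ((s+1)*p + s*q) = (int s + 1) * int p + int s * int q" by (simp add: algebra_simps)
    also have "\<dots> = (int s + 1) * (cseq r (m+2) - cseq r (m+1)) + int s * cseq r (m+1)"
      by (simp only: ip iq)
    also have "\<dots> = cseq r (m+3) - cseq r (m+2)" by (subst c3) (simp add: r algebra_simps)
    finally have "int ((s+1)*p + s*q) = cseq r (m+3) - cseq r (m+2)" .
    then show ?thesis by linarith
  qed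
  have e2: "nat (cseq r (m+2)) = p + q"
  proof -
    have "int (p + q) = cseq r (m+2)" using ip iq by simp
    then show ?thesis by linarith
  qed
  have D4: "Dword r (m+4) = christoffel ((s+1)*p + s*q) (p+q)"
    unfolding Dword_def using e1 e2 by (simp add: numeral_eq_Suc)
  have lx: "xcoord (lam r w) = (s+1)*p + s*q" and ly: "ycoord (lam r w) = p+q"
    using lam_counts[of s w] x y r unfolding p_def q_def w_def by auto
  have lb: "balT ((s+1)*p + s*q) (p+q) (lam r w)"
    using lam_bal[of p q w s] b r unfolding p_def q_def w_def by auto
  have "christoffel ((s+1)*p + s*q) (p+q) = lam r w" using char lx ly lb by blast
  then show ?thesis using D4 lx ly lb e1 e2 unfolding w_def by simp
qed

lemma Dall:
  assumes r: "r = s + 2"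
  shows "xcoord (Dword r (m+3)) = nat (cseq r (m+2) - cseq r (m+1))
    \<and> ycoord (Dword r (m+3)) = nat (cseq r (m+1))
    \<and> balT (nat (cseq r (m+2) - cseq r (m+1))) (nat (cseq r (m+1))) (Dword r (m+3))"
proof (induction m)
  case 0
  have bE: "balT 1 0 [E]" unfolding balT_def okw_def Dv_def
  proof
    fix k show "0 \<le> int 0 * int (xcoord (take k [E])) - int 1 * int (ycoord (take k [E])) \<and>
      int 0 * int (xcoord (take k [E])) - int 1 * int (ycoord (take k [E])) < int (1 + 0)"
      by (cases k) auto
  qed
  have "christoffel 1 0 = [E]" by (rule char) (use bE in auto)
  moreover have "Dword r 3 = christoffel 1 0"
    by (simp add: Dword_def numeral_3_eq_3)
  ultimately show ?case using bE by (simp add: numeral_3_eq_3 numeral_2_eq_2)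
next
  case (Suc m)
  from Dstep[OF r] Suc show ?case by (simp add: add.commute add.left_commute numeral_eq_Suc)
qed

theorem mainTheorem3:
  fixes r n :: nat
  assumes "r \<ge> 2" and "n \<ge> 3"
  shows "lam r (Dword r n) = Dword r (n+1)
       \<and> theta (lam r (theta_inv (Cword r n))) = Cword r (n+1)"
proof -
  obtain s where r: "r = s + 2" using assms(1) by (metis add.commute le_Suc_ex)
  obtain m where n: "n = m + 3" using assms(2) by (metis add.commute le_Suc_ex)
  have CD: "Cword r (k+3) = theta (Dword r (k+3))" for k
  proof -
    define p where "p = nat (cseq r (k+2) - cseq r (k+1))"
    define q where "q = nat (cseq r (k+1))"
    have c1: "0 \<le> cseq r (k+1)" "cseq r (k+1) \<le> cseq r (k+2)" using cmono[OF assms(1), of k] by auto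
    have e: "nat (cseq r (k+2)) = p + q" using c1 unfolding p_def q_def by linarith
    note h = Dall[OF r, of k]
    have "christoffel (p+q) q = theta (Dword r (k+3))"
      by (rule char) (use h theta_counts theta_bal in \<open>auto simp: p_def q_def\<close>)
    then show ?thesis unfolding Cword_def using e q_def by (simp add: numeral_eq_Suc)
  qed
  have L: "lam r (Dword r n) = Dword r (n+1)"
    using Dstep[OF r Dall[OF r, of m, THEN conjunct1] Dall[OF r, of m, THEN conjunct2, THEN conjunct1]
      Dall[OF r, of m, THEN conjunct2, THEN conjunct2]] n by (simp add: numeral_eq_Suc)
  have C1: "Cword r n = theta (Dword r n)" using CD[of m] n by simp
  have C2: "Cword r (n+1) = theta (Dword r (n+1))" using CD[of "m+1"] n by (simp add: add.commute add.left_commute)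
  show ?thesis using L C1 C2 theta_inv_theta by simp
qed

end
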